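(* Let $k$ be an algebraically closed field of characteristic zero, $n\ge2$, $q\in k$ a primitive $2n$-th root of unity. Let $\mathfrak wH_{4n}^*$ be the algebra generated by $G,X$ with relations $G^{2n+1}=G$, $GX=-XG$, $X^2=1-G^2$, with comultiplication $\Delta(G)=G\otimes G$, $\Delta(X)=X\otimes1+G\otimes X$ (tensor products of modules are formed via $\Delta$). Define the following modules: for $s\in\{0,n\}$, $M[1,s]$ is $1$-dimensional with basis $v_s$, $Xv_s=0$, $Gv_s=(-1)^{s/n}v_s$; $M[2,s]$ is $2$-dimensional with basis $v_1^s,v_2^s$, $Xv_1^s=v_2^s$, $Xv_2^s=0$, $Gv_1^s=(-1)^{s/n}v_1^s$, $Gv_2^s=(-1)^{s/n+1}v_2^s$; for an integer $j$ with $n\nmid j$, $P_j$ is $2$-dimensional with basis $p_1^j,p_2^j$, $Xp_1^j=p_2^j$, $Xp_2^j=(1-q^{2j})p_1^j$, $Gp_1^j=q^jp_1^j$, $Gp_2^j=-q^jp_2^j$; for $i\in\{0,1\}$, $N_i$ is $1$-dimensional with basis $w_i$, $Gw_i=0$, $Xw_i=(-1)^iw_i$; $M_0$ is $2$-dimensional with basis $m_0,m_1$, $Xm_0=m_1$, $Xm_1=m_0$, $G$ acting by $0$. Then the following isomorphisms of $\mathfrak wH_{4n}^*$-modules hold: (1) for $1\le i,j\le n-1$: $P_i\otimes P_j\cong M[2,0]\oplus M[2,n]$ if $n\mid i+j$, and $P_i\otimes P_j\cong P_{i+j}\oplus P_{i+j}$ if $n\nmid i+j$; (2) for $k\in\{1,2\}$,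 $s\in\{0,n\}$, $1\le j\le n-1$: $M[k,s]\otimes P_j\cong P_j^{\oplus k}\cong P_j\otimes M[k,s]$; (3) for $k,l\in\{1,2\}$, $s,j\in\{0,n\}$: $M[k,s]\otimes M[l,j]\cong M[2,0]\oplus M[2,n]$ if $k+l=4$, and $M[k,s]\otimes M[l,j]\cong M[k+l-1,\,s+j \bmod 2n]$ if $k+l<4$; (4) for $i,j\in\{0,1\}$: $N_i\otimes N_j\cong N_i$; (5) for $k\in\{1,2\}$, $s\in\{0,n\}$, $j\in\{0,1\}$: $M[1,s]\otimes N_j\cong N_{j+s/n \bmod 2}$ and $M[2,s]\otimes N_j\cong M_0$; (6) for $k\in\{1,2\}$, $s\in\{0,n\}$, $j\in\{0,1\}$: $N_j\otimes M[k,s]\cong N_j^{\oplus k}$; (7) for $i\in\{0,1\}$, $1\le j\le n-1$: $N_i\otimes P_j\cong N_i\oplus N_i$ and $P_j\otimes N_i\cong M_0$; (8) for $i\in\{0,1\}$: $N_i\otimes M_0\cong N_i\oplus N_i$ and $M_0\otimes N_i\cong M_0$; (9) $M_0\otimes M_0\cong M_0\oplus M_0$; (10) for $k\in\{1,2\}$, $s\in\{0,n\}$: $M_0\otimes M[k,s]\cong M_0^{\oplus k}\cong M[k,s]\otimes M_0$; (11) for $1\le j\le n-1$: $M_0\otimes P_j\cong M_0\oplus M_0\cong P_j\otimes M_0$.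
   Context: The paper lists the indecomposable modules $P_j$ only for $1\le j\le n-1$; in item (1), $P_{i+j}$ with $n<i+j$ is the module defined by the same formula (equivalently, isomorphic to $P_{i+j-n}$). *)

theory Defs
  imports "Jordan_Normal_Form.Matrix" "HOL-Computational_Algebra.Polynomial"
begin

text \<open>A finite-dimensional module over the algebra generated by G, X is represented
  by the pair of matrices (action of G, action of X) with respect to a chosen basis;
  column j of a matrix holds the coordinates of the image of the j-th basis vector.\<close>
type_synonym 'a hmod = "'a mat \<times> 'a mat"

definition alg_closed :: "'a::field itself \<Rightarrow> bool" where
  "alg_closed _ = (\<forall>p::'a poly. degree p \<ge> 1 \<longrightarrow> (\<exists>x. poly p x = 0))"

definition primitive_root :: "nat \<Rightarrow> 'a::field \<Rightarrow> bool" where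
  "primitive_root m q = (q ^ m = 1 \<and> (\<forall>l. 0 < l \<and> l < m \<longrightarrow> q ^ l \<noteq> 1))"

definition kron :: "'a::semiring_1 mat \<Rightarrow> 'a mat \<Rightarrow> 'a mat" where
  "kron A B = mat (dim_row A * dim_row B) (dim_col A * dim_col B)
     (\<lambda>(i,j). A $$ (i div dim_row B, j div dim_col B) * B $$ (i mod dim_row B, j mod dim_col B))"

definition tens :: "'a::comm_ring_1 hmod \<Rightarrow> 'a hmod \<Rightarrow> 'a hmod" (infixl "\<otimes>\<^sub>H" 70) where
  "tens M N = (kron (fst M) (fst N),
               kron (snd M) (1\<^sub>m (dim_row (fst N))) + kron (fst M) (snd N))"

definition dsum :: "'a::comm_ring_1 hmod \<Rightarrow> 'a hmod \<Rightarrow> 'a hmod" (infixl "\<oplus>\<^sub>H" 65) where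
  "dsum M N = (four_block_mat (fst M) (0\<^sub>m (dim_row (fst M)) (dim_col (fst N)))
                              (0\<^sub>m (dim_row (fst N)) (dim_col (fst M))) (fst N),
               four_block_mat (snd M) (0\<^sub>m (dim_row (snd M)) (dim_col (snd N)))
                              (0\<^sub>m (dim_row (snd N)) (dim_col (snd M))) (snd N))"

fun dsum_pow :: "nat \<Rightarrow> 'a::comm_ring_1 hmod \<Rightarrow> 'a hmod" where
  "dsum_pow 0 M = (0\<^sub>m 0 0, 0\<^sub>m 0 0)"
| "dsum_pow (Suc k) M = M \<oplus>\<^sub>H dsum_pow k M"

definition hiso :: "'a::comm_ring_1 hmod \<Rightarrow> 'a hmod \<Rightarrow> bool" (infix "\<cong>\<^sub>H" 50) where
  "hiso M N = (\<exists>P Q. similar_mat_wit (fst M) (fst N) P Q \<and> similar_mat_wit (snd M) (snd N) P Q)"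

definition Mod1 :: "nat \<Rightarrow> nat \<Rightarrow> 'a::field hmod" where
  "Mod1 n s = (mat_of_rows_list 1 [[(-1) ^ (s div n)]], mat_of_rows_list 1 [[0]])"

definition Mod2 :: "nat \<Rightarrow> nat \<Rightarrow> 'a::field hmod" where
  "Mod2 n s = (mat_of_rows_list 2 [[(-1) ^ (s div n), 0], [0, (-1) ^ (s div n + 1)]],
               mat_of_rows_list 2 [[0, 0], [1, 0]])"

definition Mks :: "nat \<Rightarrow> nat \<Rightarrow> nat \<Rightarrow> 'a::field hmod" where
  "Mks n k s = (if k = 1 then Mod1 n s else Mod2 n s)"

definition Pj :: "'a::field \<Rightarrow> nat \<Rightarrow> 'a hmod" where
  "Pj q j = (mat_of_rows_list 2 [[q ^ j, 0], [0, - (q ^ j)]],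
             mat_of_rows_list 2 [[0, 1 - q ^ (2 * j)], [1, 0]])"

definition Ni :: "nat \<Rightarrow> 'a::field hmod" where
  "Ni i = (mat_of_rows_list 1 [[0]], mat_of_rows_list 1 [[(-1) ^ i]])"

definition M0 :: "'a::field hmod" where
  "M0 = (mat_of_rows_list 2 [[0, 0], [0, 0]], mat_of_rows_list 2 [[0, 1], [1, 0]])"

end

theory Submission
  imports Defs
begin

lemma all4: "(\<forall>i. i < (4::nat) \<longrightarrow> P i) \<longleftrightarrow> P 0 \<and> P 1 \<and> P 2 \<and> P 3"
  by (auto simp: less_Suc_eq numeral_eq_Suc)
lemma all2: "(\<forall>i. i < (2::nat) \<longrightarrow> P i) \<longleftrightarrow> P 0 \<and> P 1"
  by (auto simp: less_Suc_eq numeral_eq_Suc)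
lemma all1: "(\<forall>i. i < (1::nat) \<longrightarrow> P i) \<longleftrightarrow> P 0"
  by auto
lemma sum4: "(\<Sum>i\<in>{0..<4::nat}. f i) = f 0 + f 1 + f 2 + f 3"
  by (simp add: numeral_eq_Suc)
lemma sum2: "(\<Sum>i\<in>{0..<2::nat}. f i) = f 0 + f 1"
  by (simp add: numeral_eq_Suc)
lemma sum1: "(\<Sum>i\<in>{0..<1::nat}. f i) = f 0"
  by simp

lemma hiso_I:
  fixes M N :: "'a::comm_ring_1 hmod"
  assumes "fst M \<in> carrier_mat n n" "snd M \<in> carrier_mat n n"
    "fst N \<in> carrier_mat n n" "snd N \<in> carrier_mat n n"
    "P \<in> carrier_mat n n" "Q \<in> carrier_mat n n"
    "P * Q = 1\<^sub>m n" "Q * P = 1\<^sub>m n"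
    "fst M * P = P * fst N" "snd M * P = P * snd N"
  shows "M \<cong>\<^sub>H N"
proof -
  have h: "A = P * B * Q" if "A \<in> carrier_mat n n" "B \<in> carrier_mat n n" "A * P = P * B" for A B
  proof -
    have "A = A * (P * Q)" using that assms by simp
    also have "\<dots> = (A * P) * Q" by (rule assoc_mult_mat[symmetric]) (use that assms in auto)
    also have "\<dots> = P * B * Q" using that by simp
    finally show ?thesis .
  qed
  show ?thesis unfolding hiso_def similar_mat_wit_def Let_def
    apply (rule exI[of _ P], rule exI[of _ Q])
    using assms h[of "fst M" "fst N"] h[of "snd M" "snd N"] by auto
qed

lemma eqI':
  assumes "A \<in> carrier_mat n n" "B \<in> carrier_mat n n" "\<forall>i<n. \<forall>j<n. A$$(i,j) = B$$(i,j)"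
  shows "A = B"
proof (rule eq_matI)
  fix i j assume "i < dim_row B" "j < dim_col B"
  then show "A$$(i,j) = B$$(i,j)" using assms(3) carrier_matD[OF assms(2)] by simp
next
  show "dim_row A = dim_row B" using carrier_matD[OF assms(1)] carrier_matD[OF assms(2)] by simp
next
  show "dim_col A = dim_col B" using carrier_matD[OF assms(1)] carrier_matD[OF assms(2)] by simp
qed

lemma hiso_E:
  fixes M N :: "'a::comm_ring_1 hmod"
  assumes "fst M \<in> carrier_mat n n" "snd M \<in> carrier_mat n n"
    "fst N \<in> carrier_mat n n" "snd N \<in> carrier_mat n n"
    "P \<in> carrier_mat n n" "Q \<in> carrier_mat n n"
    "\<forall>i<n. \<forall>j<n. (P * Q) $$ (i,j) = (1\<^sub>m n) $$ (i,j)"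
    "\<forall>i<n. \<forall>j<n. (Q * P) $$ (i,j) = (1\<^sub>m n) $$ (i,j)"
    "\<forall>i<n. \<forall>j<n. (fst M * P) $$ (i,j) = (P * fst N) $$ (i,j)"
    "\<forall>i<n. \<forall>j<n. (snd M * P) $$ (i,j) = (P * snd N) $$ (i,j)"
  shows "M \<cong>\<^sub>H N"
    apply (rule hiso_I[where n=n and P=P and Q=Q, OF assms(1-6)])
    apply (rule eqI'[OF mult_carrier_mat[OF assms(5,6)] one_carrier_mat assms(7)])
    apply (rule eqI'[OF mult_carrier_mat[OF assms(6,5)] one_carrier_mat assms(8)])
    apply (rule eqI'[OF mult_carrier_mat[OF assms(1,5)] mult_carrier_mat[OF assms(5,3)] assms(9)])
    apply (rule eqI'[OF mult_carrier_mat[OF assms(2,5)] mult_carrier_mat[OF assms(5,4)] assms(10)])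
    done

definition Pm :: "'a::field \<Rightarrow> 'a hmod" where
  "Pm a = (mat_of_rows_list 2 [[a, 0], [0, - a]], mat_of_rows_list 2 [[0, 1 - a^2], [1, 0]])"
definition M1 :: "'a::field \<Rightarrow> 'a hmod" where
  "M1 e = (mat_of_rows_list 1 [[e]], mat_of_rows_list 1 [[0]])"
definition M2 :: "'a::field \<Rightarrow> 'a hmod" where
  "M2 e = (mat_of_rows_list 2 [[e, 0], [0, - e]], mat_of_rows_list 2 [[0, 0], [1, 0]])"
definition Nm :: "'a::field \<Rightarrow> 'a hmod" where
  "Nm x = (mat_of_rows_list 1 [[0]], mat_of_rows_list 1 [[x]])"

definition L :: "nat \<Rightarrow> 'a list list \<Rightarrow> 'a mat" where
  "L n rs = mat n n (\<lambda>(i,j). rs ! i ! j)"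

lemma L_conv: "length rs = n \<Longrightarrow> mat_of_rows_list n rs = L n rs"
  unfolding L_def mat_of_rows_list_def by simp

lemma L_carrier[simp]: "L n rs \<in> carrier_mat n n" and L_dims[simp]: "dim_row (L n rs) = n" "dim_col (L n rs) = n"
  by (auto simp: L_def)

lemma L_index[simp]: "i < n \<Longrightarrow> j < n \<Longrightarrow> L n rs $$ (i,j) = rs ! i ! j"
  by (simp add: L_def)

lemma kron_dims[simp]: "dim_row (kron A B) = dim_row A * dim_row B" "dim_col (kron A B) = dim_col A * dim_col B"
  by (auto simp: kron_def)
lemma kron_carrier[simp]: "A \<in> carrier_mat a a \<Longrightarrow> B \<in> carrier_mat b b \<Longrightarrow> kron A B \<in> carrier_mat (a*b) (a*b)"
  unfolding carrier_mat_def by simp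
lemma kron_index[simp]: "i < dim_row A * dim_row B \<Longrightarrow> j < dim_col A * dim_col B \<Longrightarrow>
  kron A B $$ (i,j) = A $$ (i div dim_row B, j div dim_col B) * B $$ (i mod dim_row B, j mod dim_col B)"
  by (simp add: kron_def)

lemma tens_simps[simp]: "fst (M \<otimes>\<^sub>H N) = kron (fst M) (fst N)"
  "snd (M \<otimes>\<^sub>H N) = kron (snd M) (1\<^sub>m (dim_row (fst N))) + kron (fst M) (snd N)"
  by (simp_all add: tens_def)
lemma dsum_simps[simp]: "fst (M \<oplus>\<^sub>H N) = four_block_mat (fst M) (0\<^sub>m (dim_row (fst M)) (dim_col (fst N)))
                              (0\<^sub>m (dim_row (fst N)) (dim_col (fst M))) (fst N)"
  "snd (M \<oplus>\<^sub>H N) = four_block_mat (snd M) (0\<^sub>m (dim_row (snd M)) (dim_col (snd N)))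
                              (0\<^sub>m (dim_row (snd N)) (dim_col (snd M))) (snd N)"
  by (simp_all add: dsum_def)

lemma Pm_simps[simp]: "fst (Pm a) = L 2 [[a, 0], [0, - a]]" "snd (Pm a) = L 2 [[0, 1 - a^2], [1, 0]]"
  by (simp_all add: Pm_def L_conv)
lemma M1_simps[simp]: "fst (M1 e) = L 1 [[e]]" "snd (M1 e) = L 1 [[0]]"
  by (simp_all add: M1_def L_conv)
lemma M2_simps[simp]: "fst (M2 e) = L 2 [[e, 0], [0, - e]]" "snd (M2 e) = L 2 [[0, 0], [1, 0]]"
  by (simp_all add: M2_def L_conv)
lemma Nm_simps[simp]: "fst (Nm x) = L 1 [[0]]" "snd (Nm x) = L 1 [[x]]"
  by (simp_all add: Nm_def L_conv)
lemma M0_simps[simp]: "fst M0 = L 2 [[0, 0], [0, 0]]" "snd M0 = L 2 [[0, 1], [1, 0]]"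
  by (simp_all add: M0_def L_conv)

lemma mult_idx: "i < dim_row A \<Longrightarrow> j < dim_col B \<Longrightarrow> dim_col A = dim_row B \<Longrightarrow>
  (A * B) $$ (i,j) = (\<Sum>k\<in>{0..<dim_row B}. A $$ (i,k) * B $$ (k,j))"
  by (auto simp: scalar_prod_def intro!: sum.cong)

lemmas mdefs = mult_idx sum4 sum2 sum1 carrier_mat_def

lemma hiso_D:
  fixes M N :: "'a::comm_ring_1 hmod"
  assumes "dim_row (fst M) = n \<and> dim_col (fst M) = n" "dim_row (snd M) = n \<and> dim_col (snd M) = n"
    "dim_row (fst N) = n \<and> dim_col (fst N) = n" "dim_row (snd N) = n \<and> dim_col (snd N) = n"
    "dim_row P = n \<and> dim_col P = n" "dim_row Q = n \<and> dim_col Q = n"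
    "\<forall>i<n. \<forall>j<n. (P * Q) $$ (i,j) = (1\<^sub>m n) $$ (i,j)"
    "\<forall>i<n. \<forall>j<n. (Q * P) $$ (i,j) = (1\<^sub>m n) $$ (i,j)"
    "\<forall>i<n. \<forall>j<n. (fst M * P) $$ (i,j) = (P * fst N) $$ (i,j)"
    "\<forall>i<n. \<forall>j<n. (snd M * P) $$ (i,j) = (P * snd N) $$ (i,j)"
  shows "M \<cong>\<^sub>H N"
  apply (rule hiso_E[where P=P and Q=Q and n=n])
  using assms(1-6) apply (simp_all only: carrier_mat_def mem_Collect_eq)
  using assms(7-10) apply (simp_all only:)
  done

lemma L1a:
  fixes a b :: "'a::field"
  assumes "a^2*b^2 - 1 \<noteq> 0"
  shows "Pm a \<otimes>\<^sub>H Pm b \<cong>\<^sub>H Pm (a*b) \<oplus>\<^sub>H Pm (a*b)"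
  apply (rule hiso_D[where n=4 and P="L 4 [[1, 0, 0, 0], [0, a, 0, 1-a^2], [0, 1, 0, -a*(1-b^2)], [0, 0, 1, 0]]" and Q="L 4 [[1, 0, 0, 0], [0, -a*(1-b^2)/(a^2*b^2-1), -(1-a^2)/(a^2*b^2-1), 0], [0, 0, 0, 1], [0, -1/(a^2*b^2-1), a/(a^2*b^2-1), 0]]"])
  apply (simp_all only: all4 all2 all1)
  using assms apply (simp_all add: mult_idx sum4 sum2 sum1  del: index_mult_mat)
  using mult_eq_0_iff[of "a^2*b^2-1" "a^2*b^2-1"] assms by (auto simp: field_simps power2_eq_square)

lemma L1b:
  fixes a :: "'a::field"
  assumes "a \<noteq> 0"
  shows "Pm a \<otimes>\<^sub>H Pm (-1/a) \<cong>\<^sub>H M2 1 \<oplus>\<^sub>H M2 (-1)"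
  apply (rule hiso_D[where n=4 and P="L 4 [[0, a*(1-(-1/a)^2), 1, 0], [1, 0, 0, a], [0, 0, 0, 1], [0, 1, 0, 0]]" and Q="L 4 [[0, 1, -a, 0], [0, 0, 0, 1], [1, 0, 0, -a*(1-(-1/a)^2)], [0, 0, 1, 0]]"])
  apply (simp_all only: all4 all2 all1)
  using assms apply (simp_all add: mult_idx sum4 sum2 sum1  del: index_mult_mat)
  apply (auto simp: field_simps power2_eq_square)?
  done

lemma M1P_p:
  fixes a :: "'a::field"
  shows "M1 1 \<otimes>\<^sub>H Pm a \<cong>\<^sub>H Pm a"
  apply (rule hiso_D[where n=2 and P="L 2 [[1, 0], [0, 1]]" and Q="L 2 [[1, 0], [0, 1]]"])
  apply (simp_all only: all4 all2 all1)
  by (simp_all add: mult_idx sum4 sum2 sum1  del: index_mult_mat)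

lemma M1P_m:
  fixes a :: "'a::field"
  assumes "1 - a^2 \<noteq> 0"
  shows "M1 (-1) \<otimes>\<^sub>H Pm a \<cong>\<^sub>H Pm a"
  apply (rule hiso_D[where n=2 and P="L 2 [[0, -(1-a^2)], [1, 0]]" and Q="L 2 [[0, 1], [-1/(1-a^2), 0]]"])
  apply (simp_all only: all4 all2 all1)
  using assms apply (simp_all add: mult_idx sum4 sum2 sum1  del: index_mult_mat)
  apply (auto simp: field_simps power2_eq_square)?
  done

lemma PM1_p:
  fixes a :: "'a::field"
  shows "Pm a \<cong>\<^sub>H Pm a \<otimes>\<^sub>H M1 1"
  apply (rule hiso_D[where n=2 and P="L 2 [[1, 0], [0, 1]]" and Q="L 2 [[1, 0], [0, 1]]"])
  apply (simp_all only: all4 all2 all1)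
  by (simp_all add: mult_idx sum4 sum2 sum1  del: index_mult_mat)

lemma PM1_m:
  fixes a :: "'a::field"
  assumes "1 - a^2 \<noteq> 0"
  shows "Pm a \<cong>\<^sub>H Pm a \<otimes>\<^sub>H M1 (-1)"
  apply (rule hiso_D[where n=2 and P="L 2 [[0, 1], [1/(1-a^2), 0]]" and Q="L 2 [[0, 1-a^2], [1, 0]]"])
  apply (simp_all only: all4 all2 all1)
  using assms apply (simp_all add: mult_idx sum4 sum2 sum1  del: index_mult_mat)
  apply (auto simp: field_simps power2_eq_square)?
  done

lemma M2P_p:
  fixes a :: "'a::field"
  assumes "1 - a^2 \<noteq> 0"
  shows "M2 1 \<otimes>\<^sub>H Pm a \<cong>\<^sub>H Pm a \<oplus>\<^sub>H Pm a"
  apply (rule hiso_D[where n=4 and P="L 4 [[1, 0, 0, 0], [0, 1, 0, 0], [0, 1, 0, -(1-a^2)], [0, 0, 1, 0]]" and Q="L 4 [[1, 0, 0, 0], [0, 1, 0, 0], [0, 0, 0, 1], [0, 1/(1-a^2), -1/(1-a^2), 0]]"])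
  apply (simp_all only: all4 all2 all1)
  using assms apply (simp_all add: mult_idx sum4 sum2 sum1  del: index_mult_mat)
  apply (auto simp: field_simps power2_eq_square)?
  done

lemma M2P_m:
  fixes a :: "'a::field"
  assumes "1 - a^2 \<noteq> 0"
  shows "M2 (-1) \<otimes>\<^sub>H Pm a \<cong>\<^sub>H Pm a \<oplus>\<^sub>H Pm a"
  apply (rule hiso_D[where n=4 and P="L 4 [[0, -(1-a^2), 0, 0], [1, 0, 0, 0], [0, 0, 1, 0], [0, 1, 0, 1]]" and Q="L 4 [[0, 1, 0, 0], [-1/(1-a^2), 0, 0, 0], [0, 0, 1, 0], [1/(1-a^2), 0, 0, 1]]"])
  apply (simp_all only: all4 all2 all1)
  using assms apply (simp_all add: mult_idx sum4 sum2 sum1  del: index_mult_mat)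
  apply (auto simp: field_simps power2_eq_square)?
  done

lemma PM2_p:
  fixes a :: "'a::field"
  assumes "1 - a^2 \<noteq> 0"
  shows "Pm a \<oplus>\<^sub>H Pm a \<cong>\<^sub>H Pm a \<otimes>\<^sub>H M2 1"
  apply (rule hiso_D[where n=4 and P="L 4 [[1, 0, 0, 0], [0, 0, 1, 0], [0, 0, 0, 1], [0, 1/(1-a^2), -a/(1-a^2), 0]]" and Q="L 4 [[1, 0, 0, 0], [0, a, 0, 1-a^2], [0, 1, 0, 0], [0, 0, 1, 0]]"])
  apply (simp_all only: all4 all2 all1)
  using assms apply (simp_all add: mult_idx sum4 sum2 sum1  del: index_mult_mat)
  apply (auto simp: field_simps power2_eq_square)?
  done

lemma PM2_m:
  fixes a :: "'a::field"
  assumes "1 - a^2 \<noteq> 0"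
  shows "Pm a \<oplus>\<^sub>H Pm a \<cong>\<^sub>H Pm a \<otimes>\<^sub>H M2 (-1)"
  apply (rule hiso_D[where n=4 and P="L 4 [[0, 1, 0, 0], [a/(1-a^2), 0, 0, 1], [0, 0, 1, 0], [1/(1-a^2), 0, 0, 0]]" and Q="L 4 [[0, 0, 0, 1-a^2], [1, 0, 0, 0], [0, 0, 1, 0], [0, 1, 0, -a]]"])
  apply (simp_all only: all4 all2 all1)
  using assms apply (simp_all add: mult_idx sum4 sum2 sum1  del: index_mult_mat)
  apply (auto simp: field_simps power2_eq_square)?
  done

lemma M1M1_pp:
  shows "M1 1 \<otimes>\<^sub>H (M1 1 :: 'a::field hmod) \<cong>\<^sub>H M1 1"
  apply (rule hiso_D[where n=1 and P="L 1 [[1]]" and Q="L 1 [[1]]"])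
  apply (simp_all only: all4 all2 all1)
  by (simp_all add: mult_idx sum4 sum2 sum1  del: index_mult_mat)

lemma M1M2_pp:
  shows "M1 1 \<otimes>\<^sub>H (M2 1 :: 'a::field hmod) \<cong>\<^sub>H M2 1"
  apply (rule hiso_D[where n=2 and P="L 2 [[1, 0], [0, 1]]" and Q="L 2 [[1, 0], [0, 1]]"])
  apply (simp_all only: all4 all2 all1)
  by (simp_all add: mult_idx sum4 sum2 sum1  del: index_mult_mat)

lemma M2M1_pp:
  shows "M2 1 \<otimes>\<^sub>H (M1 1 :: 'a::field hmod) \<cong>\<^sub>H M2 1"
  apply (rule hiso_D[where n=2 and P="L 2 [[1, 0], [0, 1]]" and Q="L 2 [[1, 0], [0, 1]]"])
  apply (simp_all only: all4 all2 all1)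
  by (simp_all add: mult_idx sum4 sum2 sum1  del: index_mult_mat)

lemma M2M2_pp:
  shows "M2 1 \<otimes>\<^sub>H (M2 1 :: 'a::field hmod) \<cong>\<^sub>H M2 1 \<oplus>\<^sub>H M2 (-1)"
  apply (rule hiso_D[where n=4 and P="L 4 [[1, 0, 0, 0], [0, 1, 1, 0], [0, 1, 0, 0], [0, 0, 0, 1]]" and Q="L 4 [[1, 0, 0, 0], [0, 0, 1, 0], [0, 1, -1, 0], [0, 0, 0, 1]]"])
  apply (simp_all only: all4 all2 all1)
  by (simp_all add: mult_idx sum4 sum2 sum1  del: index_mult_mat)

lemma M1M1_pm:
  shows "M1 1 \<otimes>\<^sub>H (M1 (-1) :: 'a::field hmod) \<cong>\<^sub>H M1 (-1)"
  apply (rule hiso_D[where n=1 and P="L 1 [[1]]" and Q="L 1 [[1]]"])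
  apply (simp_all only: all4 all2 all1)
  by (simp_all add: mult_idx sum4 sum2 sum1  del: index_mult_mat)

lemma M1M2_pm:
  shows "M1 1 \<otimes>\<^sub>H (M2 (-1) :: 'a::field hmod) \<cong>\<^sub>H M2 (-1)"
  apply (rule hiso_D[where n=2 and P="L 2 [[1, 0], [0, 1]]" and Q="L 2 [[1, 0], [0, 1]]"])
  apply (simp_all only: all4 all2 all1)
  by (simp_all add: mult_idx sum4 sum2 sum1  del: index_mult_mat)

lemma M2M1_pm:
  shows "M2 1 \<otimes>\<^sub>H (M1 (-1) :: 'a::field hmod) \<cong>\<^sub>H M2 (-1)"
  apply (rule hiso_D[where n=2 and P="L 2 [[1, 0], [0, 1]]" and Q="L 2 [[1, 0], [0, 1]]"])
  apply (simp_all only: all4 all2 all1)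
  by (simp_all add: mult_idx sum4 sum2 sum1  del: index_mult_mat)

lemma M2M2_pm:
  shows "M2 1 \<otimes>\<^sub>H (M2 (-1) :: 'a::field hmod) \<cong>\<^sub>H M2 1 \<oplus>\<^sub>H M2 (-1)"
  apply (rule hiso_D[where n=4 and P="L 4 [[0, 0, 1, 0], [1, 0, 0, 1], [0, 0, 0, 1], [0, 1, 0, 0]]" and Q="L 4 [[0, 1, -1, 0], [0, 0, 0, 1], [1, 0, 0, 0], [0, 0, 1, 0]]"])
  apply (simp_all only: all4 all2 all1)
  by (simp_all add: mult_idx sum4 sum2 sum1  del: index_mult_mat)

lemma M1M1_mp:
  shows "M1 (-1) \<otimes>\<^sub>H (M1 1 :: 'a::field hmod) \<cong>\<^sub>H M1 (-1)"
  apply (rule hiso_D[where n=1 and P="L 1 [[1]]" and Q="L 1 [[1]]"])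
  apply (simp_all only: all4 all2 all1)
  by (simp_all add: mult_idx sum4 sum2 sum1  del: index_mult_mat)

lemma M1M2_mp:
  shows "M1 (-1) \<otimes>\<^sub>H (M2 1 :: 'a::field hmod) \<cong>\<^sub>H M2 (-1)"
  apply (rule hiso_D[where n=2 and P="L 2 [[1, 0], [0, -1]]" and Q="L 2 [[1, 0], [0, -1]]"])
  apply (simp_all only: all4 all2 all1)
  by (simp_all add: mult_idx sum4 sum2 sum1  del: index_mult_mat)

lemma M2M1_mp:
  shows "M2 (-1) \<otimes>\<^sub>H (M1 1 :: 'a::field hmod) \<cong>\<^sub>H M2 (-1)"
  apply (rule hiso_D[where n=2 and P="L 2 [[1, 0], [0, 1]]" and Q="L 2 [[1, 0], [0, 1]]"])
  apply (simp_all only: all4 all2 all1)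
  by (simp_all add: mult_idx sum4 sum2 sum1  del: index_mult_mat)

lemma M2M2_mp:
  shows "M2 (-1) \<otimes>\<^sub>H (M2 1 :: 'a::field hmod) \<cong>\<^sub>H M2 1 \<oplus>\<^sub>H M2 (-1)"
  apply (rule hiso_D[where n=4 and P="L 4 [[0, 0, 1, 0], [1, 0, 0, -1], [0, 0, 0, 1], [0, 1, 0, 0]]" and Q="L 4 [[0, 1, 1, 0], [0, 0, 0, 1], [1, 0, 0, 0], [0, 0, 1, 0]]"])
  apply (simp_all only: all4 all2 all1)
  by (simp_all add: mult_idx sum4 sum2 sum1  del: index_mult_mat)

lemma M1M1_mm:
  shows "M1 (-1) \<otimes>\<^sub>H (M1 (-1) :: 'a::field hmod) \<cong>\<^sub>H M1 1"
  apply (rule hiso_D[where n=1 and P="L 1 [[1]]" and Q="L 1 [[1]]"])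
  apply (simp_all only: all4 all2 all1)
  by (simp_all add: mult_idx sum4 sum2 sum1  del: index_mult_mat)

lemma M1M2_mm:
  shows "M1 (-1) \<otimes>\<^sub>H (M2 (-1) :: 'a::field hmod) \<cong>\<^sub>H M2 1"
  apply (rule hiso_D[where n=2 and P="L 2 [[1, 0], [0, -1]]" and Q="L 2 [[1, 0], [0, -1]]"])
  apply (simp_all only: all4 all2 all1)
  by (simp_all add: mult_idx sum4 sum2 sum1  del: index_mult_mat)

lemma M2M1_mm:
  shows "M2 (-1) \<otimes>\<^sub>H (M1 (-1) :: 'a::field hmod) \<cong>\<^sub>H M2 1"
  apply (rule hiso_D[where n=2 and P="L 2 [[1, 0], [0, 1]]" and Q="L 2 [[1, 0], [0, 1]]"])
  apply (simp_all only: all4 all2 all1)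
  by (simp_all add: mult_idx sum4 sum2 sum1  del: index_mult_mat)

lemma M2M2_mm:
  shows "M2 (-1) \<otimes>\<^sub>H (M2 (-1) :: 'a::field hmod) \<cong>\<^sub>H M2 1 \<oplus>\<^sub>H M2 (-1)"
  apply (rule hiso_D[where n=4 and P="L 4 [[1, 0, 0, 0], [0, -1, 1, 0], [0, 1, 0, 0], [0, 0, 0, 1]]" and Q="L 4 [[1, 0, 0, 0], [0, 0, 1, 0], [0, 1, 1, 0], [0, 0, 0, 1]]"])
  apply (simp_all only: all4 all2 all1)
  by (simp_all add: mult_idx sum4 sum2 sum1  del: index_mult_mat)

lemma NN:
  fixes x y :: "'a::field"
  shows "Nm x \<otimes>\<^sub>H Nm y \<cong>\<^sub>H Nm x"
  apply (rule hiso_D[where n=1 and P="L 1 [[1]]" and Q="L 1 [[1]]"])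
  apply (simp_all only: all4 all2 all1)
  by (simp_all add: mult_idx sum4 sum2 sum1  del: index_mult_mat)

lemma M1N:
  fixes e x :: "'a::field"
  shows "M1 e \<otimes>\<^sub>H Nm x \<cong>\<^sub>H Nm (e*x)"
  apply (rule hiso_D[where n=1 and P="L 1 [[1]]" and Q="L 1 [[1]]"])
  apply (simp_all only: all4 all2 all1)
  by (simp_all add: mult_idx sum4 sum2 sum1  del: index_mult_mat)

lemma M2N_pp:
  shows "M2 1 \<otimes>\<^sub>H (Nm 1 :: 'a::field hmod) \<cong>\<^sub>H M0"
  apply (rule hiso_D[where n=2 and P="L 2 [[1, 1], [0, 1]]" and Q="L 2 [[1, -1], [0, 1]]"])
  apply (simp_all only: all4 all2 all1)
  by (simp_all add: mult_idx sum4 sum2 sum1  del: index_mult_mat)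

lemma M2N_pm:
  shows "M2 1 \<otimes>\<^sub>H (Nm (-1) :: 'a::field hmod) \<cong>\<^sub>H M0"
  apply (rule hiso_D[where n=2 and P="L 2 [[1, -1], [0, 1]]" and Q="L 2 [[1, 1], [0, 1]]"])
  apply (simp_all only: all4 all2 all1)
  by (simp_all add: mult_idx sum4 sum2 sum1  del: index_mult_mat)

lemma M2N_mp:
  shows "M2 (-1) \<otimes>\<^sub>H (Nm 1 :: 'a::field hmod) \<cong>\<^sub>H M0"
  apply (rule hiso_D[where n=2 and P="L 2 [[1, -1], [0, 1]]" and Q="L 2 [[1, 1], [0, 1]]"])
  apply (simp_all only: all4 all2 all1)
  by (simp_all add: mult_idx sum4 sum2 sum1  del: index_mult_mat)

lemma M2N_mm:
  shows "M2 (-1) \<otimes>\<^sub>H (Nm (-1) :: 'a::field hmod) \<cong>\<^sub>H M0"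
  apply (rule hiso_D[where n=2 and P="L 2 [[1, 1], [0, 1]]" and Q="L 2 [[1, -1], [0, 1]]"])
  apply (simp_all only: all4 all2 all1)
  by (simp_all add: mult_idx sum4 sum2 sum1  del: index_mult_mat)

lemma NM1:
  fixes e x :: "'a::field"
  shows "Nm x \<otimes>\<^sub>H M1 e \<cong>\<^sub>H Nm x"
  apply (rule hiso_D[where n=1 and P="L 1 [[1]]" and Q="L 1 [[1]]"])
  apply (simp_all only: all4 all2 all1)
  by (simp_all add: mult_idx sum4 sum2 sum1  del: index_mult_mat)

lemma NM2:
  fixes e x :: "'a::field"
  shows "Nm x \<otimes>\<^sub>H M2 e \<cong>\<^sub>H Nm x \<oplus>\<^sub>H Nm x"
  apply (rule hiso_D[where n=2 and P="L 2 [[1, 0], [0, 1]]" and Q="L 2 [[1, 0], [0, 1]]"])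
  apply (simp_all only: all4 all2 all1)
  by (simp_all add: mult_idx sum4 sum2 sum1  del: index_mult_mat)

lemma NP:
  fixes a x :: "'a::field"
  shows "Nm x \<otimes>\<^sub>H Pm a \<cong>\<^sub>H Nm x \<oplus>\<^sub>H Nm x"
  apply (rule hiso_D[where n=2 and P="L 2 [[1, 0], [0, 1]]" and Q="L 2 [[1, 0], [0, 1]]"])
  apply (simp_all only: all4 all2 all1)
  by (simp_all add: mult_idx sum4 sum2 sum1  del: index_mult_mat)

lemma PN_p:
  fixes a :: "'a::field"
  shows "Pm a \<otimes>\<^sub>H Nm 1 \<cong>\<^sub>H M0"
  apply (rule hiso_D[where n=2 and P="L 2 [[1, a], [0, 1]]" and Q="L 2 [[1, -a], [0, 1]]"])
  apply (simp_all only: all4 all2 all1)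
  by (simp_all add: mult_idx sum4 sum2 sum1 algebra_simps power2_eq_square del: index_mult_mat)

lemma PN_m:
  fixes a :: "'a::field"
  shows "Pm a \<otimes>\<^sub>H Nm (-1) \<cong>\<^sub>H M0"
  apply (rule hiso_D[where n=2 and P="L 2 [[1, -a], [0, 1]]" and Q="L 2 [[1, a], [0, 1]]"])
  apply (simp_all only: all4 all2 all1)
  by (simp_all add: mult_idx sum4 sum2 sum1 algebra_simps power2_eq_square del: index_mult_mat)

lemma NM0:
  fixes x :: "'a::field"
  shows "Nm x \<otimes>\<^sub>H M0 \<cong>\<^sub>H Nm x \<oplus>\<^sub>H Nm x"
  apply (rule hiso_D[where n=2 and P="L 2 [[1, 0], [0, 1]]" and Q="L 2 [[1, 0], [0, 1]]"])
  apply (simp_all only: all4 all2 all1)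
  by (simp_all add: mult_idx sum4 sum2 sum1  del: index_mult_mat)

lemma M0N:
  fixes x :: "'a::field"
  shows "M0 \<otimes>\<^sub>H Nm x \<cong>\<^sub>H M0"
  apply (rule hiso_D[where n=2 and P="L 2 [[1, 0], [0, 1]]" and Q="L 2 [[1, 0], [0, 1]]"])
  apply (simp_all only: all4 all2 all1)
  by (simp_all add: mult_idx sum4 sum2 sum1  del: index_mult_mat)

lemma M0M0:
  shows "M0 \<otimes>\<^sub>H (M0::'a::field hmod) \<cong>\<^sub>H M0 \<oplus>\<^sub>H M0"
  apply (rule hiso_D[where n=4 and P="L 4 [[1, 0, 0, 0], [0, 0, 1, 0], [0, 1, 0, 0], [0, 0, 0, 1]]" and Q="L 4 [[1, 0, 0, 0], [0, 0, 1, 0], [0, 1, 0, 0], [0, 0, 0, 1]]"])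
  apply (simp_all only: all4 all2 all1)
  by (simp_all add: mult_idx sum4 sum2 sum1  del: index_mult_mat)

lemma M0M1:
  fixes e :: "'a::field"
  shows "M0 \<otimes>\<^sub>H M1 e \<cong>\<^sub>H M0"
  apply (rule hiso_D[where n=2 and P="L 2 [[1, 0], [0, 1]]" and Q="L 2 [[1, 0], [0, 1]]"])
  apply (simp_all only: all4 all2 all1)
  by (simp_all add: mult_idx sum4 sum2 sum1  del: index_mult_mat)

lemma M0M2:
  fixes e :: "'a::field"
  shows "M0 \<otimes>\<^sub>H M2 e \<cong>\<^sub>H M0 \<oplus>\<^sub>H M0"
  apply (rule hiso_D[where n=4 and P="L 4 [[1, 0, 0, 0], [0, 0, 1, 0], [0, 1, 0, 0], [0, 0, 0, 1]]" and Q="L 4 [[1, 0, 0, 0], [0, 0, 1, 0], [0, 1, 0, 0], [0, 0, 0, 1]]"])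
  apply (simp_all only: all4 all2 all1)
  by (simp_all add: mult_idx sum4 sum2 sum1  del: index_mult_mat)

lemma M1M0_p:
  shows "(M0::'a::field hmod) \<cong>\<^sub>H M1 1 \<otimes>\<^sub>H M0"
  apply (rule hiso_D[where n=2 and P="L 2 [[1, 0], [0, 1]]" and Q="L 2 [[1, 0], [0, 1]]"])
  apply (simp_all only: all4 all2 all1)
  by (simp_all add: mult_idx sum4 sum2 sum1  del: index_mult_mat)

lemma M2M0_p:
  shows "M0 \<oplus>\<^sub>H (M0::'a::field hmod) \<cong>\<^sub>H M2 1 \<otimes>\<^sub>H M0"
  apply (rule hiso_D[where n=4 and P="L 4 [[1, 0, 0, 0], [0, 1, 0, 0], [0, -1, 1, 0], [0, 0, 0, -1]]" and Q="L 4 [[1, 0, 0, 0], [0, 1, 0, 0], [0, 1, 1, 0], [0, 0, 0, -1]]"])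
  apply (simp_all only: all4 all2 all1)
  by (simp_all add: mult_idx sum4 sum2 sum1  del: index_mult_mat)

lemma M1M0_m:
  shows "(M0::'a::field hmod) \<cong>\<^sub>H M1 (-1) \<otimes>\<^sub>H M0"
  apply (rule hiso_D[where n=2 and P="L 2 [[1, 0], [0, -1]]" and Q="L 2 [[1, 0], [0, -1]]"])
  apply (simp_all only: all4 all2 all1)
  by (simp_all add: mult_idx sum4 sum2 sum1  del: index_mult_mat)

lemma M2M0_m:
  shows "M0 \<oplus>\<^sub>H (M0::'a::field hmod) \<cong>\<^sub>H M2 (-1) \<otimes>\<^sub>H M0"
  apply (rule hiso_D[where n=4 and P="L 4 [[1, 0, 0, 0], [0, -1, 0, 0], [0, 1, 1, 0], [0, 0, 0, 1]]" and Q="L 4 [[1, 0, 0, 0], [0, -1, 0, 0], [0, 1, 1, 0], [0, 0, 0, 1]]"])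
  apply (simp_all only: all4 all2 all1)
  by (simp_all add: mult_idx sum4 sum2 sum1  del: index_mult_mat)

lemma M0P:
  fixes a :: "'a::field"
  shows "M0 \<otimes>\<^sub>H Pm a \<cong>\<^sub>H M0 \<oplus>\<^sub>H M0"
  apply (rule hiso_D[where n=4 and P="L 4 [[1, 0, 0, 0], [0, 0, 1, 0], [0, 1, 0, 0], [0, 0, 0, 1]]" and Q="L 4 [[1, 0, 0, 0], [0, 0, 1, 0], [0, 1, 0, 0], [0, 0, 0, 1]]"])
  apply (simp_all only: all4 all2 all1)
  by (simp_all add: mult_idx sum4 sum2 sum1  del: index_mult_mat)

lemma PM0:
  fixes a :: "'a::field"
  shows "M0 \<oplus>\<^sub>H M0 \<cong>\<^sub>H Pm a \<otimes>\<^sub>H M0"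
  apply (rule hiso_D[where n=4 and P="L 4 [[1, 0, 0, -a], [0, 0, 1, 0], [0, 1, -a, 0], [0, 0, 0, 1]]" and Q="L 4 [[1, 0, 0, a], [0, a, 1, 0], [0, 1, 0, 0], [0, 0, 0, 1]]"])
  apply (simp_all only: all4 all2 all1)
  by (simp_all add: mult_idx sum4 sum2 sum1 algebra_simps power2_eq_square del: index_mult_mat)


lemma fb_E: "four_block_mat A (0\<^sub>m (dim_row A) 0) (0\<^sub>m 0 (dim_col A)) (0\<^sub>m 0 0) = A"
  by (rule eq_matI) simp_all

lemma dsum_E: "M \<oplus>\<^sub>H (0\<^sub>m 0 0, 0\<^sub>m 0 0) = M"
  by (simp add: dsum_def fb_E)

lemma dsum_pow_1: "dsum_pow 1 M = M"
  by (simp add: dsum_E)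

lemma dsum_pow_2: "dsum_pow 2 M = M \<oplus>\<^sub>H M"
  by (simp add: numeral_eq_Suc dsum_E)

lemma Mks1: "Mks n 1 s = M1 ((-1) ^ (s div n))"
  by (simp add: Mks_def Mod1_def M1_def)

lemma Mks1': "Mks n (Suc 0) s = M1 ((-1) ^ (s div n))"
  by (simp add: Mks_def Mod1_def M1_def)

lemma Mks2: "Mks n 2 s = M2 ((-1) ^ (s div n))"
  by (simp add: Mks_def Mod2_def M2_def)

lemma Mks2': "Mks n (Suc (Suc 0)) s = M2 ((-1) ^ (s div n))"
  by (simp add: Mks_def Mod2_def M2_def)

lemma Ni_Nm: "Ni i = Nm ((-1) ^ i)"
  by (simp add: Ni_def Nm_def)

lemma PjPm: "Pj q j = Pm (q ^ j)"
  by (simp add: Pj_def Pm_def power_mult[symmetric] mult.commute[of 2 j])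

lemma M1N': "y = e * x \<Longrightarrow> M1 e \<otimes>\<^sub>H Nm x \<cong>\<^sub>H Nm y"
  using M1N by simp

lemma GP3:
  fixes n :: nat
  assumes n0: "0 < n"
  shows "\<forall>k l s j. k \<in> {1, 2} \<and> l \<in> {1, 2} \<and> s \<in> {0, n} \<and> j \<in> {0, n} \<longrightarrow>
     (k + l = 4 \<longrightarrow> Mks n k s \<otimes>\<^sub>H Mks n l j \<cong>\<^sub>H Mks n 2 0 \<oplus>\<^sub>H Mks n 2 n) \<and>
     (k + l < 4 \<longrightarrow> Mks n k s \<otimes>\<^sub>H Mks n l j \<cong>\<^sub>H Mks n (k + l - 1) ((s + j) mod (2 * n)))"
proof (intro allI impI)
  have nn: "(n + n) mod (2 * n) = 0" by (simp add: mult_2)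
  have n2: "n mod (2 * n) = n" using n0 by simp
  fix k l s j :: nat assume h: "k \<in> {1, 2} \<and> l \<in> {1, 2} \<and> s \<in> {0, n} \<and> j \<in> {0, n}"
  then have "k = 1 \<or> k = 2" "l = 1 \<or> l = 2" "s = 0 \<or> s = n" "j = 0 \<or> j = n" by auto
  then show "(k + l = 4 \<longrightarrow> Mks n k s \<otimes>\<^sub>H Mks n l j \<cong>\<^sub>H Mks n 2 0 \<oplus>\<^sub>H Mks n 2 n) \<and>
     (k + l < 4 \<longrightarrow> Mks n k s \<otimes>\<^sub>H Mks n l j \<cong>\<^sub>H Mks n (k + l - 1) ((s + j) mod (2 * n)))"
    using n0 nn n2 by (auto simp: Mks1 Mks1' Mks2 Mks2' dsum_E M1M1_pp M1M1_pm M1M1_mp M1M1_mm M1M2_pp M1M2_pm M1M2_mp M1M2_mm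
       M2M1_pp M2M1_pm M2M1_mp M2M1_mm M2M2_pp M2M2_pm M2M2_mp M2M2_mm)
qed

lemma GP4:
  fixes n :: nat
  assumes n0: "0 < n"
  shows "\<forall>i j. i \<in> {0, 1} \<and> j \<in> {0, 1} \<longrightarrow> Ni i \<otimes>\<^sub>H Ni j \<cong>\<^sub>H Ni i"
  by (simp add: Ni_Nm NN)

lemma GP5:
  fixes n :: nat
  assumes n0: "0 < n"
  shows "\<forall>s j. s \<in> {0, n} \<and> j \<in> {0, 1} \<longrightarrow>
     Mks n 1 s \<otimes>\<^sub>H Ni j \<cong>\<^sub>H Ni ((j + s div n) mod 2) \<and>
     Mks n 2 s \<otimes>\<^sub>H Ni j \<cong>\<^sub>H M0"
proof (intro allI impI)
  fix s j :: nat assume h: "s \<in> {0, n} \<and> j \<in> {0, (1::nat)}"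
  then have "s = 0 \<or> s = n" "j = 0 \<or> j = 1" by auto
  then show "Mks n 1 s \<otimes>\<^sub>H Ni j \<cong>\<^sub>H Ni ((j + s div n) mod 2) \<and> Mks n 2 s \<otimes>\<^sub>H Ni j \<cong>\<^sub>H M0"
    using n0 by (auto simp: Mks1 Mks1' Mks2 Mks2' dsum_E Ni_Nm M1N' M2N_pp M2N_pm M2N_mp M2N_mm)
qed

lemma GP6:
  fixes n :: nat
  assumes n0: "0 < n"
  shows "\<forall>k s j. k \<in> {1, 2} \<and> s \<in> {0, n} \<and> j \<in> {0, 1} \<longrightarrow>
     Ni j \<otimes>\<^sub>H Mks n k s \<cong>\<^sub>H dsum_pow k (Ni j)"
  using n0 by (auto simp: Mks1 Mks1' Mks2 Mks2' dsum_E Ni_Nm NM1 NM2 dsum_pow_1 dsum_pow_2)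

lemma GP8:
  fixes n :: nat
  assumes n0: "0 < n"
  shows "\<forall>i. i \<in> {0, 1} \<longrightarrow>
     Ni i \<otimes>\<^sub>H M0 \<cong>\<^sub>H Ni i \<oplus>\<^sub>H Ni i \<and> M0 \<otimes>\<^sub>H Ni i \<cong>\<^sub>H M0"
  by (simp add: Ni_Nm NM0 M0N)

lemma GP9:
  fixes n :: nat
  assumes n0: "0 < n"
  shows "M0 \<otimes>\<^sub>H M0 \<cong>\<^sub>H M0 \<oplus>\<^sub>H (M0 :: 'a::field hmod)"
  by (rule M0M0)

lemma GP10:
  fixes n :: nat
  assumes n0: "0 < n"
  shows "\<forall>k s. k \<in> {1, 2} \<and> s \<in> {0, n} \<longrightarrow>
     M0 \<otimes>\<^sub>H Mks n k s \<cong>\<^sub>H dsum_pow k M0 \<and> dsum_pow k M0 \<cong>\<^sub>H Mks n k s \<otimes>\<^sub>H (M0 :: 'a::field hmod)"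
  using n0 by (auto simp: Mks1 Mks1' Mks2 Mks2' dsum_E M0M1 M0M2 dsum_pow_1 dsum_pow_2 M1M0_p M1M0_m M2M0_p M2M0_m)

theorem theorem5p3:
  fixes q :: "'a::field_char_0" and n :: nat
  assumes "alg_closed TYPE('a)"
    and "n \<ge> 2"
    and "primitive_root (2 * n) q"
  shows
   "(\<forall>i j. 1 \<le> i \<and> i \<le> n - 1 \<and> 1 \<le> j \<and> j \<le> n - 1 \<longrightarrow>
       (n dvd (i + j) \<longrightarrow> Pj q i \<otimes>\<^sub>H Pj q j \<cong>\<^sub>H Mks n 2 0 \<oplus>\<^sub>H Mks n 2 n) \<and>
       (\<not> n dvd (i + j) \<longrightarrow> Pj q i \<otimes>\<^sub>H Pj q j \<cong>\<^sub>H Pj q (i + j) \<oplus>\<^sub>H Pj q (i + j)))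
  \<and> (\<forall>k s j. k \<in> {1, 2} \<and> s \<in> {0, n} \<and> 1 \<le> j \<and> j \<le> n - 1 \<longrightarrow>
       Mks n k s \<otimes>\<^sub>H Pj q j \<cong>\<^sub>H dsum_pow k (Pj q j) \<and>
       dsum_pow k (Pj q j) \<cong>\<^sub>H Pj q j \<otimes>\<^sub>H Mks n k s)
  \<and> (\<forall>k l s j. k \<in> {1, 2} \<and> l \<in> {1, 2} \<and> s \<in> {0, n} \<and> j \<in> {0, n} \<longrightarrow>
       (k + l = 4 \<longrightarrow> Mks n k s \<otimes>\<^sub>H Mks n l j \<cong>\<^sub>H Mks n 2 0 \<oplus>\<^sub>H Mks n 2 n) \<and>
       (k + l < 4 \<longrightarrow> Mks n k s \<otimes>\<^sub>H Mks n l j \<cong>\<^sub>H Mks n (k + l - 1) ((s + j) mod (2 * n))))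
  \<and> (\<forall>i j. i \<in> {0, 1} \<and> j \<in> {0, 1} \<longrightarrow> Ni i \<otimes>\<^sub>H Ni j \<cong>\<^sub>H Ni i)
  \<and> (\<forall>s j. s \<in> {0, n} \<and> j \<in> {0, 1} \<longrightarrow>
       Mks n 1 s \<otimes>\<^sub>H Ni j \<cong>\<^sub>H Ni ((j + s div n) mod 2) \<and>
       Mks n 2 s \<otimes>\<^sub>H Ni j \<cong>\<^sub>H M0)
  \<and> (\<forall>k s j. k \<in> {1, 2} \<and> s \<in> {0, n} \<and> j \<in> {0, 1} \<longrightarrow>
       Ni j \<otimes>\<^sub>H Mks n k s \<cong>\<^sub>H dsum_pow k (Ni j))
  \<and> (\<forall>i j. i \<in> {0, 1} \<and> 1 \<le> j \<and> j \<le> n - 1 \<longrightarrow>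
       Ni i \<otimes>\<^sub>H Pj q j \<cong>\<^sub>H Ni i \<oplus>\<^sub>H Ni i \<and> Pj q j \<otimes>\<^sub>H Ni i \<cong>\<^sub>H M0)
  \<and> (\<forall>i. i \<in> {0, 1} \<longrightarrow>
       Ni i \<otimes>\<^sub>H M0 \<cong>\<^sub>H Ni i \<oplus>\<^sub>H Ni i \<and> M0 \<otimes>\<^sub>H Ni i \<cong>\<^sub>H M0)
  \<and> M0 \<otimes>\<^sub>H M0 \<cong>\<^sub>H M0 \<oplus>\<^sub>H M0
  \<and> (\<forall>k s. k \<in> {1, 2} \<and> s \<in> {0, n} \<longrightarrow>
       M0 \<otimes>\<^sub>H Mks n k s \<cong>\<^sub>H dsum_pow k M0 \<and> dsum_pow k M0 \<cong>\<^sub>H Mks n k s \<otimes>\<^sub>H M0)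
  \<and> (\<forall>j. 1 \<le> j \<and> j \<le> n - 1 \<longrightarrow>
       M0 \<otimes>\<^sub>H Pj q j \<cong>\<^sub>H M0 \<oplus>\<^sub>H M0 \<and> M0 \<oplus>\<^sub>H M0 \<cong>\<^sub>H Pj q j \<otimes>\<^sub>H M0)"
proof -
  have n0: "0 < n" using assms(2) by simp
  have qp: "q ^ (2 * n) = 1" and qnp: "\<And>l. 0 < l \<Longrightarrow> l < 2 * n \<Longrightarrow> q ^ l \<noteq> 1"
    using assms(3) unfolding primitive_root_def by auto
  have q0: "q \<noteq> 0"
  proof
    assume "q = 0"
    then show False using qp n0 by (simp add: power_0_left)
  qed
  have sq: "(q ^ j) ^ 2 = q ^ (2 * j)" for j
    by (simp add: power_mult[symmetric] mult.commute[of 2 j])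
  have nz: "1 - (q ^ j) ^ 2 \<noteq> 0" if "1 \<le> j" "j \<le> n - 1" for j
  proof -
    have "q ^ (2 * j) \<noteq> 1" using qnp[of "2 * j"] that n0 by simp
    then show ?thesis by (simp add: sq)
  qed
  have qn: "q ^ n = -1"
  proof -
    have "(q ^ n) ^ 2 = 1" using qp sq[of n] by simp
    then have "(q ^ n - 1) * (q ^ n + 1) = 0" by (simp add: algebra_simps power2_eq_square)
    moreover have "q ^ n \<noteq> 1" using qnp[of n] n0 by simp
    ultimately have "q ^ n + 1 = 0" by simp
    then show ?thesis by (simp add: eq_neg_iff_add_eq_0)
  qed
  have P1: "\<forall>i j. 1 \<le> i \<and> i \<le> n - 1 \<and> 1 \<le> j \<and> j \<le> n - 1 \<longrightarrow>
       (n dvd (i + j) \<longrightarrow> Pj q i \<otimes>\<^sub>H Pj q j \<cong>\<^sub>H Mks n 2 0 \<oplus>\<^sub>H Mks n 2 n) \<and>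
       (\<not> n dvd (i + j) \<longrightarrow> Pj q i \<otimes>\<^sub>H Pj q j \<cong>\<^sub>H Pj q (i + j) \<oplus>\<^sub>H Pj q (i + j))"
  proof (intro allI impI conjI)
    fix i j assume b: "1 \<le> i \<and> i \<le> n - 1 \<and> 1 \<le> j \<and> j \<le> n - 1"
    {
      assume dv: "n dvd (i + j)"
      obtain c where c: "i + j = n * c" using dv by (auto elim: dvdE)
      have c1: "c \<ge> 1" using c b by (cases c) auto
      have c2: "c < 2"
      proof (rule ccontr)
        assume "\<not> c < 2"
        then have "n * 2 \<le> n * c" by simp
        then show False using c b n0 by linarith
      qed
      have ij: "i + j = n" using c c1 c2 by (cases c) auto
      have "q ^ i * q ^ j = -1" using qn ij by (simp add: power_add[symmetric])
      then have qj: "q ^ j = -1 / q ^ i" using q0 by (simp add: field_simps)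
      have "Pm (q ^ i) \<otimes>\<^sub>H Pm (-1 / q ^ i) \<cong>\<^sub>H M2 1 \<oplus>\<^sub>H M2 (-1)"
        by (rule L1b) (simp add: q0)
      then show "Pj q i \<otimes>\<^sub>H Pj q j \<cong>\<^sub>H Mks n 2 0 \<oplus>\<^sub>H Mks n 2 n"
        using n0 by (simp add: PjPm qj Mks2)
    }
    {
      assume nd: "\<not> n dvd (i + j)"
      have ne: "q ^ (2 * (i + j)) \<noteq> 1"
      proof
        assume h: "q ^ (2 * (i + j)) = 1"
        show False
        proof (cases "2 * (i + j) < 2 * n")
          case True
          then show False using qnp[of "2 * (i + j)"] h b by simp
        next
          case False
          then have ge: "2 * n \<le> 2 * (i + j)" by simp
          have "q ^ (2 * (i + j)) = q ^ (2 * n) * q ^ (2 * (i + j) - 2 * n)"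
            using ge by (simp add: power_add[symmetric])
          then have h2: "q ^ (2 * (i + j) - 2 * n) = 1" using h qp by simp
          have "i + j \<noteq> n" using nd by auto
          then have "0 < 2 * (i + j) - 2 * n" using ge by simp
          moreover have "2 * (i + j) - 2 * n < 2 * n" using b n0 by arith
          ultimately show False using qnp h2 by blast
        qed
      qed
      have "(q ^ i) ^ 2 * (q ^ j) ^ 2 = q ^ (2 * (i + j))"
        by (simp add: sq power_add[symmetric] distrib_left)
      then have "(q ^ i) ^ 2 * (q ^ j) ^ 2 - 1 \<noteq> 0" using ne by simp
      then have "Pm (q ^ i) \<otimes>\<^sub>H Pm (q ^ j) \<cong>\<^sub>H Pm (q ^ i * q ^ j) \<oplus>\<^sub>H Pm (q ^ i * q ^ j)"
        by (rule L1a)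
      then show "Pj q i \<otimes>\<^sub>H Pj q j \<cong>\<^sub>H Pj q (i + j) \<oplus>\<^sub>H Pj q (i + j)"
        by (simp add: PjPm power_add)
    }
  qed
  have P2: "\<forall>k s j. k \<in> {1, 2} \<and> s \<in> {0, n} \<and> 1 \<le> j \<and> j \<le> n - 1 \<longrightarrow>
       Mks n k s \<otimes>\<^sub>H Pj q j \<cong>\<^sub>H dsum_pow k (Pj q j) \<and>
       dsum_pow k (Pj q j) \<cong>\<^sub>H Pj q j \<otimes>\<^sub>H Mks n k s"
  proof (intro allI impI)
    fix k s j :: nat assume h: "k \<in> {1, 2} \<and> s \<in> {0, n} \<and> 1 \<le> j \<and> j \<le> n - 1"
    then have nzj: "1 - (q ^ j) ^ 2 \<noteq> 0" using nz by auto
    from h have "k = 1 \<or> k = 2" "s = 0 \<or> s = n" by auto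
    then show "Mks n k s \<otimes>\<^sub>H Pj q j \<cong>\<^sub>H dsum_pow k (Pj q j) \<and>
       dsum_pow k (Pj q j) \<cong>\<^sub>H Pj q j \<otimes>\<^sub>H Mks n k s"
      using n0 nzj M1P_m[OF nzj] PM1_m[OF nzj] M2P_p[OF nzj] M2P_m[OF nzj] PM2_p[OF nzj] PM2_m[OF nzj]
      by (auto simp: PjPm Mks1 Mks1' Mks2 Mks2' dsum_E dsum_pow_1 dsum_pow_2 M1P_p PM1_p)
  qed
  have P7: "\<forall>i j. i \<in> {0, 1} \<and> 1 \<le> j \<and> j \<le> n - 1 \<longrightarrow>
       Ni i \<otimes>\<^sub>H Pj q j \<cong>\<^sub>H Ni i \<oplus>\<^sub>H Ni i \<and> Pj q j \<otimes>\<^sub>H Ni i \<cong>\<^sub>H M0"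
    by (auto simp: Ni_Nm PjPm NP PN_p PN_m)
  have P11: "\<forall>j. 1 \<le> j \<and> j \<le> n - 1 \<longrightarrow>
       M0 \<otimes>\<^sub>H Pj q j \<cong>\<^sub>H M0 \<oplus>\<^sub>H M0 \<and> M0 \<oplus>\<^sub>H M0 \<cong>\<^sub>H Pj q j \<otimes>\<^sub>H M0"
    by (simp add: PjPm M0P PM0)
  show ?thesis
    apply (intro conjI)
    apply (rule P1)
    apply (rule P2)
    apply (rule GP3[OF n0])
    apply (rule GP4[OF n0])
    apply (rule GP5[OF n0])
    apply (rule GP6[OF n0])
    apply (rule P7)
    apply (rule GP8[OF n0])
    apply (rule GP9[OF n0])
    apply (rule GP10[OF n0])
    apply (rule P11)
    done
qed

end
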